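(* For every formula $A$ of $\mathbf{L_1}$, if not $\vdash_T A$, then $\dashv_H A$.
   Context: Formulas of $\mathbf{L_1}$: built from atomic formulas $\epsilon ab$ ($a,b$ name variables, possibly equal) with primitive connectives $\vee,\sim$; $\wedge,\supset,\equiv$ defined as usual. Disjunctions may be associated in any way. $\vdash_H A$: $A$ belongs to the smallest set containing all instances of classical propositional tautologies and all formulas $\epsilon ab\supset\epsilon aa$, $(\epsilon ab\wedge\epsilon bc)\supset\epsilon ac$, $(\epsilon ab\wedge\epsilon bb)\supset\epsilon ba$, closed under modus ponens. Positive/negative parts (occurrences): $A$ is a positive part of $A$; if $B\vee C$ is a positive part then $B,C$ are positive parts; if $\sim B$ is a positive part then $B$ is a negative part; if $\sim B$ is a negative part then $B$ is a positive part. $F[B_+]$ ($G[B_-]$) denotes a formula with a specified occurrence of $B$ as positive (negative) part; $F[B_+,C_-]$ etc. denote specified non-overlapping occurrences. Tableaux: reduction rules ($\vee_-$) $G[B\vee C_-]$ $\mapsto$ two branches $G[B\vee C_-]\vee\sim B$, $G[B\vee C_-]\vee\sim C$; ($\epsilon_1$) $G[\epsilon ab_-]\mapsto G[\epsilon ab_-]\vee\sim\epsilon aa$; ($\epsilon_2$) $G[\epsilon ab_-,\epsilon bc_-]\mapsto G[\epsilon ab_-,\epsilon bc_-]\vee\sim\epsilon ac$; ($\epsilon_{3b}$) $G[\epsilon ab_-,\epsilon bb_-]\mapsto G[\epsilon ab_-,\epsilon bb_-]\vee\sim\epsilon ba$. A tableau for $A$ is a finite tree with root $A$ whose non-leaf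 nodes have as children the result of applying one rule. A branch is closed if its last formula has the form $F[B_+,B_-]$; a tableau is closed if all branches are. $\vdash_T A$: $A$ has a closed tableau. Hintikka formula: a formula $H$ such that (1) $H$ is not of the form $F[B_+,B_-]$; (2) if $B\vee C$ is a negative part of $H$ then $B$ or $C$ is; (3) if $\epsilon ab$ is a negative part then so is $\epsilon aa$; (4) if $\epsilon ab,\epsilon bc$ are negative parts then so is $\epsilon ac$; (5) if $\epsilon ab,\epsilon bb$ are negative parts then so is $\epsilon ba$. $\mathbf{HAR}$: fix a name variable $a_0$; $\dashv_H$ is the smallest set such that $\dashv_H\epsilon a_0a_0$; $\dashv_H\sim\epsilon a_0a_0$; if $\vdash_H A\supset B$ and $\dashv_H B$ then $\dashv_H A$; if $\dashv_H A$ and $A$ is obtained from $B$ by uniform substitution of name variables for name variables then $\dashv_H B$; if $A$ is a Hintikka formula that is a disjunction of atomic or negated atomic formulas, $\dashv_H A$, and $\epsilon ab$ is not a negative part of $A$, then $\dashv_H A\vee\epsilon ab$. *)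

theory Defs
  imports Main "HOL-Library.Multiset"
begin

datatype 'n form = Eps 'n 'n | Or "'n form" "'n form" | Neg "'n form"

type_synonym fm = "nat form"

definition Conj :: "'n form \<Rightarrow> 'n form \<Rightarrow> 'n form" where
  "Conj A B = Neg (Or (Neg A) (Neg B))"

definition Imp :: "'n form \<Rightarrow> 'n form \<Rightarrow> 'n form" where
  "Imp A B = Or (Neg A) B"

datatype pform = PVar nat | POr pform pform | PNeg pform

fun peval :: "(nat \<Rightarrow> bool) \<Rightarrow> pform \<Rightarrow> bool" where
  "peval v (PVar p) = v p"
| "peval v (POr P Q) = (peval v P \<or> peval v Q)"
| "peval v (PNeg P) = (\<not> peval v P)"

definition ptaut :: "pform \<Rightarrow> bool" where
  "ptaut P = (\<forall>v. peval v P)"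

fun psubst :: "(nat \<Rightarrow> fm) \<Rightarrow> pform \<Rightarrow> fm" where
  "psubst \<sigma> (PVar p) = \<sigma> p"
| "psubst \<sigma> (POr P Q) = Or (psubst \<sigma> P) (psubst \<sigma> Q)"
| "psubst \<sigma> (PNeg P) = Neg (psubst \<sigma> P)"

definition taut_instance :: "fm \<Rightarrow> bool" where
  "taut_instance A = (\<exists>P \<sigma>. ptaut P \<and> A = psubst \<sigma> P)"

inductive provH :: "fm \<Rightarrow> bool" where
  taut: "taut_instance A \<Longrightarrow> provH A"
| ax1: "provH (Imp (Eps a b) (Eps a a))"
| ax2: "provH (Imp (Conj (Eps a b) (Eps b c)) (Eps a c))"
| ax3: "provH (Imp (Conj (Eps a b) (Eps b b)) (Eps b a))"
| mp: "provH (Imp A B) \<Longrightarrow> provH A \<Longrightarrow> provH B"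

text \<open>parts p X: the multiset of occurrences (with polarity; True = positive)
  of parts of X, when X itself occurs with polarity p.\<close>

fun parts :: "bool \<Rightarrow> 'n form \<Rightarrow> (bool \<times> 'n form) multiset" where
  "parts p (Eps a b) = {#(p, Eps a b)#}"
| "parts p (Or B C) = {#(p, Or B C)#} + (if p then parts True B + parts True C else {#})"
| "parts p (Neg B) = {#(p, Neg B)#} + parts (\<not> p) B"

definition pos_part :: "'n form \<Rightarrow> 'n form \<Rightarrow> bool" where
  "pos_part B A = ((True, B) \<in># parts True A)"

definition neg_part :: "'n form \<Rightarrow> 'n form \<Rightarrow> bool" where
  "neg_part B A = ((False, B) \<in># parts True A)"

text \<open>A formula of the form F[B+, B-].\<close>
definition closed_form :: "'n form \<Rightarrow> bool" where
  "closed_form A = (\<exists>B. pos_part B A \<and> neg_part B A)"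

text \<open>tab_closed A: A has a closed tableau (a finite tree built by the reduction
  rules, all of whose branches end in a closed formula).  Two specified
  occurrences must be distinct occurrences (multiset inclusion).\<close>

inductive tab_closed :: "fm \<Rightarrow> bool" where
  leaf: "closed_form A \<Longrightarrow> tab_closed A"
| or_neg: "neg_part (Or B C) A \<Longrightarrow> tab_closed (Or A (Neg B)) \<Longrightarrow> tab_closed (Or A (Neg C))
           \<Longrightarrow> tab_closed A"
| eps1: "neg_part (Eps a b) A \<Longrightarrow> tab_closed (Or A (Neg (Eps a a))) \<Longrightarrow> tab_closed A"
| eps2: "{#(False, Eps a b), (False, Eps b c)#} \<subseteq># parts True A
         \<Longrightarrow> tab_closed (Or A (Neg (Eps a c))) \<Longrightarrow> tab_closed A"
| eps3b: "{#(False, Eps a b), (False, Eps b b)#} \<subseteq># parts True A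
         \<Longrightarrow> tab_closed (Or A (Neg (Eps b a))) \<Longrightarrow> tab_closed A"

definition hintikka :: "fm \<Rightarrow> bool" where
  "hintikka H =
     ((\<not> closed_form H)
    \<and> (\<forall>B C. neg_part (Or B C) H \<longrightarrow> neg_part B H \<or> neg_part C H)
    \<and> (\<forall>a b. neg_part (Eps a b) H \<longrightarrow> neg_part (Eps a a) H)
    \<and> (\<forall>a b c. neg_part (Eps a b) H \<and> neg_part (Eps b c) H \<longrightarrow> neg_part (Eps a c) H)
    \<and> (\<forall>a b. neg_part (Eps a b) H \<and> neg_part (Eps b b) H \<longrightarrow> neg_part (Eps b a) H))"

inductive lit_disj :: "fm \<Rightarrow> bool" where
  "lit_disj (Eps a b)"
| "lit_disj (Neg (Eps a b))"
| "lit_disj A \<Longrightarrow> lit_disj B \<Longrightarrow> lit_disj (Or A B)"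

inductive refH :: "nat \<Rightarrow> fm \<Rightarrow> bool" for a0 :: nat where
  base1: "refH a0 (Eps a0 a0)"
| base2: "refH a0 (Neg (Eps a0 a0))"
| rmp: "provH (Imp A B) \<Longrightarrow> refH a0 B \<Longrightarrow> refH a0 A"
| rsubst: "refH a0 A \<Longrightarrow> A = map_form f B \<Longrightarrow> refH a0 B"
| rext: "hintikka A \<Longrightarrow> lit_disj A \<Longrightarrow> refH a0 A \<Longrightarrow> \<not> neg_part (Eps a b) A
         \<Longrightarrow> refH a0 (Or A (Eps a b))"

end

theory Submission
  imports Defs "HOL-Library.Nat_Bijection"
begin

fun feval :: "(nat \<Rightarrow> nat \<Rightarrow> bool) \<Rightarrow> fm \<Rightarrow> bool" where
  "feval w (Eps a b) = w a b"
| "feval w (Or A B) = (feval w A \<or> feval w B)"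
| "feval w (Neg A) = (\<not> feval w A)"

fun tr :: "fm \<Rightarrow> pform" where
  "tr (Eps a b) = PVar (prod_encode (a,b))"
| "tr (Or A B) = POr (tr A) (tr B)"
| "tr (Neg A) = PNeg (tr A)"

lemma psubst_tr: "psubst (\<lambda>k. case prod_decode k of (a,b) \<Rightarrow> Eps a b) (tr X) = X"
  by (induction X) auto

lemma peval_tr: "peval v (tr X) = feval (\<lambda>a b. v (prod_encode (a,b))) X"
  by (induction X) auto

lemma valid_provH: assumes "\<forall>w. feval w X" shows "provH X"
proof -
  have "ptaut (tr X)" using assms by (simp add: ptaut_def peval_tr)
  then have "taut_instance X" unfolding taut_instance_def using psubst_tr by metis
  then show ?thesis by (rule provH.taut)
qed

lemma valid_imp: "(\<And>w. feval w A \<Longrightarrow> feval w B) \<Longrightarrow> provH (Imp A B)"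
  by (rule valid_provH) (auto simp: Imp_def)

lemma parts_self: "(p, X) \<in># parts p X"
  by (cases X) auto

lemma parts_sub: "(q,Y) \<in># parts p X \<Longrightarrow> set_mset (parts q Y) \<subseteq> set_mset (parts p X)"
proof (induction X arbitrary: p)
  case (Eps a b) then show ?case by auto
next
  case (Or B C) then show ?case by (auto split: if_splits)
next
  case (Neg B) then show ?case by auto
qed


lemma hint_val:
  assumes h2: "\<forall>B C. neg_part (Or B C) H \<longrightarrow> neg_part B H \<or> neg_part C H"
    and wn: "\<And>a b. neg_part (Eps a b) H \<Longrightarrow> w a b"
    and wp: "\<And>a b. pos_part (Eps a b) H \<Longrightarrow> \<not> w a b"
    and m: "(q, Y) \<in># parts True H"
  shows "feval w Y = (\<not> q)"
  using m
proof (induction Y arbitrary: q)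
  case (Eps a b) then show ?case using wn wp by (cases q) (auto simp: pos_part_def neg_part_def)
next
  case (Or B C)
  show ?case
  proof (cases q)
    case True
    have s: "set_mset (parts True (Or B C)) \<subseteq> set_mset (parts True H)"
    proof -
      have "(True, Or B C) \<in># parts True H" using Or.prems True by simp
      then show ?thesis by (rule parts_sub)
    qed
    have "(True,B) \<in> set_mset (parts True (Or B C))" "(True,C) \<in> set_mset (parts True (Or B C))"
      using parts_self[of True B] parts_self[of True C] by simp_all
    then have "(True,B) \<in># parts True H" "(True,C) \<in># parts True H" using s by blast+
    then show ?thesis using Or.IH True by auto
  next
    case False
    then have "neg_part B H \<or> neg_part C H" using h2 Or.prems by (auto simp: neg_part_def)
    then show ?thesis using Or.IH False by (auto simp: neg_part_def)
  qed
next
  case (Neg B)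
  have s: "set_mset (parts q (Neg B)) \<subseteq> set_mset (parts True H)"
    using parts_sub[OF Neg.prems] .
  have "(\<not>q, B) \<in> set_mset (parts q (Neg B))" using parts_self[of "\<not>q" B] by simp
  then have "(\<not>q, B) \<in># parts True H" using s by blast
  then show ?case using Neg.IH by auto
qed


definition E :: "nat \<times> nat \<Rightarrow> fm" where "E q = Eps (fst q) (snd q)"

primrec L0 :: "nat \<times> nat \<Rightarrow> (nat \<times> nat) list \<Rightarrow> fm" where
  "L0 p [] = Neg (E p)"
| "L0 p (q#qs) = Or (Neg (E q)) (L0 p qs)"

primrec Lf :: "nat \<times> nat \<Rightarrow> (nat \<times> nat) list \<Rightarrow> (nat \<times> nat) list \<Rightarrow> fm" where
  "Lf p qs [] = L0 p qs"
| "Lf p qs (r#rs) = Or (Lf p qs rs) (E r)"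

lemma L0_neg: "(False, Y) \<in># parts True (L0 p qs) \<longleftrightarrow> Y \<in> E ` insert p (set qs)"
  by (induction qs) (auto simp: E_def)

lemma L0_pos: "(True, Eps a b) \<notin># parts True (L0 p qs)"
  by (induction qs) (auto simp: E_def)

lemma Lf_neg: "(False, Y) \<in># parts True (Lf p qs rs) \<longleftrightarrow> Y \<in> E ` insert p (set qs)"
  by (induction rs) (auto simp: E_def L0_neg)

lemma Lf_pos: "(True, Eps a b) \<in># parts True (Lf p qs rs) \<Longrightarrow> (a,b) \<in> set rs"
  by (induction rs) (auto simp: E_def L0_pos)

lemma Lf_lit: "lit_disj (Lf p qs rs)"
proof -
  have "lit_disj (L0 p qs)" by (induction qs) (auto simp: E_def intro: lit_disj.intros)
  then show ?thesis by (induction rs) (auto simp: E_def intro: lit_disj.intros)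
qed

lemma Lf_feval: "feval w (Lf p qs rs) \<longleftrightarrow>
   (\<exists>q\<in>insert p (set qs). \<not> w (fst q) (snd q)) \<or> (\<exists>r\<in>set rs. w (fst r) (snd r))"
proof -
  have "feval w (L0 p qs) \<longleftrightarrow> (\<exists>q\<in>insert p (set qs). \<not> w (fst q) (snd q))"
    by (induction qs) (auto simp: E_def)
  then show ?thesis by (induction rs) (auto simp: E_def)
qed

lemma L0_collapse: "feval w (map_form (\<lambda>_. c) (L0 p qs)) \<longleftrightarrow> \<not> w c c"
  by (induction qs) (auto simp: E_def)

lemma L0_ref: "refH a0 (L0 p qs)"
proof -
  have "provH (Imp (map_form (\<lambda>_. a0) (L0 p qs)) (Neg (Eps a0 a0)))"
    by (rule valid_imp) (simp add: L0_collapse)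
  then have "refH a0 (map_form (\<lambda>_. a0) (L0 p qs))" using refH.base2 by (rule refH.rmp)
  then show ?thesis using refH.rsubst by blast
qed

lemma Lf_hint:
  fixes p :: "nat \<times> nat" and qs :: "(nat \<times> nat) list" and N
  defines "N \<equiv> insert p (set qs)"
  assumes c3: "\<And>a b. (a,b) \<in> N \<Longrightarrow> (a,a) \<in> N"
    and c4: "\<And>a b c. (a,b) \<in> N \<Longrightarrow> (b,c) \<in> N \<Longrightarrow> (a,c) \<in> N"
    and c5: "\<And>a b. (a,b) \<in> N \<Longrightarrow> (b,b) \<in> N \<Longrightarrow> (b,a) \<in> N"
    and dj: "set rs \<inter> N = {}"
  shows "hintikka (Lf p qs rs)"
proof -
  have ng: "neg_part Y (Lf p qs rs) \<longleftrightarrow> Y \<in> E ` N" for Y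
    by (simp add: neg_part_def Lf_neg N_def)
  have ne: "neg_part (Eps a b) (Lf p qs rs) \<longleftrightarrow> (a,b) \<in> N" for a b
    by (force simp: ng E_def)
  have nc: "\<not> closed_form (Lf p qs rs)"
  proof
    assume "closed_form (Lf p qs rs)"
    then obtain B where "pos_part B (Lf p qs rs)" "neg_part B (Lf p qs rs)"
      unfolding closed_form_def by blast
    then obtain q where q: "q \<in> N" "B = E q" "(True, B) \<in># parts True (Lf p qs rs)"
      by (auto simp: ng pos_part_def)
    then have "q \<in> set rs" using Lf_pos[of "fst q" "snd q"] by (simp add: E_def)
    then show False using q dj by blast
  qed
  have no: "\<not> neg_part (Or B C) (Lf p qs rs)" for B C by (auto simp: ng E_def)
  show ?thesis unfolding hintikka_def
  proof (intro conjI allI impI)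
    show "\<not> closed_form (Lf p qs rs)" by (rule nc)
  next
    fix B C assume "neg_part (Or B C) (Lf p qs rs)" then show "neg_part B (Lf p qs rs) \<or> neg_part C (Lf p qs rs)"
      using no by blast
  next
    fix a b assume "neg_part (Eps a b) (Lf p qs rs)" then show "neg_part (Eps a a) (Lf p qs rs)"
      unfolding ne using c3 by blast
  next
    fix a b c assume "neg_part (Eps a b) (Lf p qs rs) \<and> neg_part (Eps b c) (Lf p qs rs)"
    then show "neg_part (Eps a c) (Lf p qs rs)"
      unfolding ne using c4 by blast
  next
    fix a b assume "neg_part (Eps a b) (Lf p qs rs) \<and> neg_part (Eps b b) (Lf p qs rs)"
    then show "neg_part (Eps b a) (Lf p qs rs)"
      unfolding ne using c5 by blast
  qed
qed

lemma Lf_ref: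
  fixes p :: "nat \<times> nat" and qs :: "(nat \<times> nat) list" and N
  defines "N \<equiv> insert p (set qs)"
  assumes c3: "\<And>a b. (a,b) \<in> N \<Longrightarrow> (a,a) \<in> N"
    and c4: "\<And>a b c. (a,b) \<in> N \<Longrightarrow> (b,c) \<in> N \<Longrightarrow> (a,c) \<in> N"
    and c5: "\<And>a b. (a,b) \<in> N \<Longrightarrow> (b,b) \<in> N \<Longrightarrow> (b,a) \<in> N"
  shows "set rs \<inter> N = {} \<Longrightarrow> refH a0 (Lf p qs rs)"
proof (induction rs)
  case Nil then show ?case by (simp add: L0_ref)
next
  case (Cons r rs)
  have dj: "set rs \<inter> N = {}" using Cons.prems by auto
  have h: "hintikka (Lf p qs rs)"
    by (rule Lf_hint[of p qs rs, folded N_def]) (fact c3, fact c4, fact c5, fact dj)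
  have IH: "refH a0 (Lf p qs rs)" using Cons.IH dj by blast
  have "\<not> neg_part (Eps (fst r) (snd r)) (Lf p qs rs)"
    using Cons.prems unfolding neg_part_def Lf_neg N_def[symmetric] E_def by auto
  then have "refH a0 (Or (Lf p qs rs) (Eps (fst r) (snd r)))"
    using refH.rext[OF h Lf_lit IH] by blast
  then show ?case by (simp add: E_def)
qed


fun atom :: "fm \<Rightarrow> nat \<times> nat" where
  "atom (Eps a b) = (a,b)"
| "atom _ = (0,0)"

lemma hint_ref:
  assumes H: "hintikka H"
  shows "\<exists>L. refH a0 L \<and> (\<forall>w. feval w H \<longrightarrow> feval w L)"
proof -
  define N0 where "N0 = {(a,b). neg_part (Eps a b) H}"
  define P where "P = {(a,b). pos_part (Eps a b) H}"
  have fN0: "finite N0"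
  proof (rule finite_subset)
    show "N0 \<subseteq> (atom \<circ> snd) ` set_mset (parts True H)"
    proof
      fix z assume "z \<in> N0"
      then obtain a b where z: "z = (a,b)" "(False, Eps a b) \<in># parts True H"
        unfolding N0_def neg_part_def by blast
      then show "z \<in> (atom \<circ> snd) ` set_mset (parts True H)"
        by (intro image_eqI[of _ _ "(False, Eps a b)"]) simp_all
    qed
  qed simp
  have fP: "finite P"
  proof (rule finite_subset)
    show "P \<subseteq> (atom \<circ> snd) ` set_mset (parts True H)"
    proof
      fix z assume "z \<in> P"
      then obtain a b where z: "z = (a,b)" "(True, Eps a b) \<in># parts True H"
        unfolding P_def pos_part_def by blast
      then show "z \<in> (atom \<circ> snd) ` set_mset (parts True H)"
        by (intro image_eqI[of _ _ "(True, Eps a b)"]) simp_all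
    qed
  qed simp
  have "finite (fst ` P)" using fP by simp
  then obtain x where x: "x \<notin> fst ` P" using ex_new_if_finite[OF infinite_UNIV_nat] by blast
  then have xP: "(x,x) \<notin> P" by force
  define N where "N = (if N0 = {} then {(x,x)} else N0)"
  have hc: "\<not> closed_form H"
    and h2: "\<forall>B C. neg_part (Or B C) H \<longrightarrow> neg_part B H \<or> neg_part C H"
    and h3: "\<forall>a b. neg_part (Eps a b) H \<longrightarrow> neg_part (Eps a a) H"
    and h4: "\<forall>a b c. neg_part (Eps a b) H \<and> neg_part (Eps b c) H \<longrightarrow> neg_part (Eps a c) H"
    and h5: "\<forall>a b. neg_part (Eps a b) H \<and> neg_part (Eps b b) H \<longrightarrow> neg_part (Eps b a) H"
    using H unfolding hintikka_def by blast+
  have c3: "(a,a) \<in> N" if "(a,b) \<in> N" for a b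
  proof (cases "N0 = {}")
    case True then show ?thesis using that unfolding N_def by simp
  next
    case False then have NN: "N = N0" unfolding N_def by simp
    have "neg_part (Eps a b) H" using that NN unfolding N0_def by simp
    then have "neg_part (Eps a a) H" using h3 by blast
    then show ?thesis using NN unfolding N0_def by simp
  qed
  have c4: "(a,c) \<in> N" if "(a,b) \<in> N" "(b,c) \<in> N" for a b c
  proof (cases "N0 = {}")
    case True then show ?thesis using that unfolding N_def by simp
  next
    case False then have NN: "N = N0" unfolding N_def by simp
    have "neg_part (Eps a b) H" "neg_part (Eps b c) H" using that NN unfolding N0_def by simp_all
    then have "neg_part (Eps a c) H" using h4 by blast
    then show ?thesis using NN unfolding N0_def by simp
  qed
  have c5: "(b,a) \<in> N" if "(a,b) \<in> N" "(b,b) \<in> N" for a b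
  proof (cases "N0 = {}")
    case True then show ?thesis using that unfolding N_def by simp
  next
    case False then have NN: "N = N0" unfolding N_def by simp
    have "neg_part (Eps a b) H" "neg_part (Eps b b) H" using that NN unfolding N0_def by simp_all
    then have "neg_part (Eps b a) H" using h5 by blast
    then show ?thesis using NN unfolding N0_def by simp
  qed
  have dj: "P \<inter> N = {}"
  proof (cases "N0 = {}")
    case True then show ?thesis using xP unfolding N_def by simp
  next
    case False then have NN: "N = N0" unfolding N_def by simp
    have "\<not> (pos_part (Eps a b) H \<and> neg_part (Eps a b) H)" for a b
      using hc unfolding closed_form_def by blast
    then show ?thesis unfolding NN N0_def P_def by blast
  qed
  have fN: "finite N" "N \<noteq> {}" using fN0 unfolding N_def by auto
  obtain ns where ns: "set ns = N" using fN(1) finite_list by blast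
  with fN(2) obtain p qs where pq: "insert p (set qs) = N"
    by (cases ns) auto
  obtain rs where rs: "set rs = P" using fP finite_list by blast
  have ref: "refH a0 (Lf p qs rs)"
    by (rule Lf_ref[of p qs rs, unfolded pq]) (fact c3, fact c4, fact c5, use dj rs in blast)
  have sem: "feval w (Lf p qs rs)" if fw: "feval w H" for w
  proof (rule ccontr)
    assume "\<not> feval w (Lf p qs rs)"
    then have wN: "\<And>q. q \<in> N \<Longrightarrow> w (fst q) (snd q)" and wP: "\<And>r. r \<in> P \<Longrightarrow> \<not> w (fst r) (snd r)"
      unfolding Lf_feval pq rs by blast+
    have "feval w H = (\<not> True)"
    proof (rule hint_val[OF h2])
      fix a b assume "neg_part (Eps a b) H"
      then have "(a,b) \<in> N" unfolding N_def N0_def by auto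
      then show "w a b" using wN by fastforce
    next
      fix a b assume "pos_part (Eps a b) H"
      then have "(a,b) \<in> P" unfolding P_def by auto
      then show "\<not> w a b" using wP by fastforce
    next
      show "(True, H) \<in># parts True H" by (rule parts_self)
    qed
    then show False using fw by simp
  qed
  show ?thesis using ref sem by blast
qed


fun subs :: "fm \<Rightarrow> fm set" where
  "subs (Eps a b) = {Eps a b}"
| "subs (Or B C) = insert (Or B C) (subs B \<union> subs C)"
| "subs (Neg B) = insert (Neg B) (subs B)"

lemma subs_self: "X \<in> subs X" by (cases X) auto

lemma finite_subs: "finite (subs X)" by (induction X) auto

lemma subs_trans: "Y \<in> subs X \<Longrightarrow> subs Y \<subseteq> subs X"
  by (induction X) auto

lemma subs_names: "Y \<in> subs X \<Longrightarrow> set_form Y \<subseteq> set_form X"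
  by (induction X) auto

lemma parts_subs: "(q,Y) \<in># parts p X \<Longrightarrow> Y \<in> subs X"
  by (induction X arbitrary: p) (auto split: if_splits)

definition U :: "fm \<Rightarrow> fm set" where
  "U A = subs A \<union> (\<lambda>(a,c). Eps a c) ` (set_form A \<times> set_form A)"

lemma finite_U: "finite (U A)"
  unfolding U_def by (simp add: finite_subs)

lemma U_names: "Y \<in> U A \<Longrightarrow> set_form Y \<subseteq> set_form A"
  unfolding U_def using subs_names by auto

lemma U_eps: "a \<in> set_form A \<Longrightarrow> c \<in> set_form A \<Longrightarrow> Eps a c \<in> U A"
  unfolding U_def by (intro UnI2 image_eqI[of _ _ "(a,c)"]) auto

lemma U_closed: "Y \<in> U A \<Longrightarrow> (q,Z) \<in># parts p Y \<Longrightarrow> Z \<in> U A"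
proof -
  assume Y: "Y \<in> U A" and Z: "(q,Z) \<in># parts p Y"
  have ZY: "Z \<in> subs Y" using parts_subs[OF Z] .
  show "Z \<in> U A"
  proof (cases "Y \<in> subs A")
    case True then show ?thesis using subs_trans ZY unfolding U_def by blast
  next
    case False
    then obtain a c where "Y = Eps a c" using Y unfolding U_def by auto
    then show ?thesis using ZY Y by simp
  qed
qed

lemma U_or: "Or B C \<in> U A \<Longrightarrow> B \<in> U A \<and> C \<in> U A"
proof -
  assume h: "Or B C \<in> U A"
  then have "Or B C \<in> subs A" unfolding U_def by auto
  then have "subs (Or B C) \<subseteq> subs A" by (rule subs_trans)
  then show ?thesis unfolding U_def using subs_self[of B] subs_self[of C] by auto
qed

lemma neg_part_ext: "neg_part Z (Or G (Neg X)) \<longleftrightarrow> neg_part Z G \<or> (False,Z) \<in># parts False X"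
  by (simp add: neg_part_def)


lemma hint_cases:
  assumes nh: "\<not> hintikka G" and nc: "\<not> closed_form G"
  obtains (c2) B C where "neg_part (Or B C) G" "\<not> neg_part B G" "\<not> neg_part C G"
      | (c3) a b where "neg_part (Eps a b) G" "\<not> neg_part (Eps a a) G"
      | (c4) a b c where "neg_part (Eps a b) G" "neg_part (Eps b c) G" "\<not> neg_part (Eps a c) G"
      | (c5) a b where "neg_part (Eps a b) G" "neg_part (Eps b b) G" "\<not> neg_part (Eps b a) G"
proof (cases "\<forall>B C. neg_part (Or B C) G \<longrightarrow> neg_part B G \<or> neg_part C G")
  case False then obtain B C where "neg_part (Or B C) G" "\<not> neg_part B G" "\<not> neg_part C G" by blast
  then show ?thesis by (rule c2)
next
  case T2: True
  show ?thesis
  proof (cases "\<forall>a b. neg_part (Eps a b) G \<longrightarrow> neg_part (Eps a a) G")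
    case False then obtain a b where "neg_part (Eps a b) G" "\<not> neg_part (Eps a a) G" by blast
    then show ?thesis by (rule c3)
  next
    case T3: True
    show ?thesis
    proof (cases "\<forall>a b c. neg_part (Eps a b) G \<and> neg_part (Eps b c) G \<longrightarrow> neg_part (Eps a c) G")
      case False then obtain a b c where "neg_part (Eps a b) G" "neg_part (Eps b c) G" "\<not> neg_part (Eps a c) G" by blast
      then show ?thesis by (rule c4)
    next
      case T4: True
      show ?thesis
      proof (cases "\<forall>a b. neg_part (Eps a b) G \<and> neg_part (Eps b b) G \<longrightarrow> neg_part (Eps b a) G")
        case False then obtain a b where "neg_part (Eps a b) G" "neg_part (Eps b b) G" "\<not> neg_part (Eps b a) G" by blast
        then show ?thesis by (rule c5)
      next
        case T5: True
        have "hintikka G" unfolding hintikka_def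
          by (intro conjI) (fact nc, fact T2, fact T3, fact T4, fact T5)
        with nh show ?thesis by contradiction
      qed
    qed
  qed
qed

lemma two_sub: "x \<noteq> y \<Longrightarrow> x \<in># M \<Longrightarrow> y \<in># M \<Longrightarrow> {#x, y#} \<subseteq># M"
  by (simp add: insert_subset_eq_iff in_diff_count)

lemma sat:
  assumes "\<And>Y. neg_part Y G \<Longrightarrow> Y \<in> U A" "\<not> tab_closed G"
  shows "\<exists>H. hintikka H \<and> (\<forall>w. feval w G \<longrightarrow> feval w H)"
  using assms
proof (induction "card (U A - {Y. neg_part Y G})" arbitrary: G rule: less_induct)
  case less
  have step: "\<exists>H. hintikka H \<and> (\<forall>w. feval w G \<longrightarrow> feval w H)"
    if X: "X \<in> U A" "\<not> neg_part X G" "\<not> tab_closed (Or G (Neg X))" for X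
  proof -
    let ?G' = "Or G (Neg X)"
    have inv: "Y \<in> U A" if "neg_part Y ?G'" for Y
      using that less.prems(1) X(1) U_closed unfolding neg_part_ext by blast
    have sub: "{Y. neg_part Y G} \<subseteq> {Y. neg_part Y ?G'}" by (auto simp: neg_part_ext)
    have "neg_part X ?G'" unfolding neg_part_ext using parts_self[of False X] by blast
    then have "U A - {Y. neg_part Y ?G'} \<subset> U A - {Y. neg_part Y G}"
      using sub X(1,2) by blast
    then have "card (U A - {Y. neg_part Y ?G'}) < card (U A - {Y. neg_part Y G})"
      by (rule psubset_card_mono[rotated]) (simp add: finite_U)
    then obtain H where H: "hintikka H" "\<forall>w. feval w ?G' \<longrightarrow> feval w H"
      using less.hyps[OF _ inv X(3)] by blast
    then show ?thesis by auto
  qed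
  show ?case
  proof (cases "hintikka G")
    case True then show ?thesis by blast
  next
    case False
    have nc: "\<not> closed_form G" using less.prems(2) tab_closed.leaf by blast
    show ?thesis
    proof (rule hint_cases[OF False nc])
      fix B C assume c2: "neg_part (Or B C) G" "\<not> neg_part B G" "\<not> neg_part C G"
      have BU: "B \<in> U A" and CU: "C \<in> U A" using U_or[OF less.prems(1)[OF c2(1)]] by auto
      have "\<not> tab_closed (Or G (Neg B)) \<or> \<not> tab_closed (Or G (Neg C))"
        using less.prems(2) tab_closed.or_neg[OF c2(1)] by blast
      then show ?thesis using step[OF BU c2(2)] step[OF CU c2(3)] by blast
    next
      fix a b assume c3: "neg_part (Eps a b) G" "\<not> neg_part (Eps a a) G"
      have "set_form (Eps a b) \<subseteq> set_form A" using U_names[OF less.prems(1)[OF c3(1)]] by blast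
      then have "Eps a a \<in> U A" by (intro U_eps) auto
      moreover have "\<not> tab_closed (Or G (Neg (Eps a a)))"
        using less.prems(2) tab_closed.eps1[OF c3(1)] by blast
      ultimately show ?thesis using step[of "Eps a a"] c3(2) by blast
    next
      fix a b c assume c4: "neg_part (Eps a b) G" "neg_part (Eps b c) G" "\<not> neg_part (Eps a c) G"
      have "set_form (Eps a b) \<subseteq> set_form A" "set_form (Eps b c) \<subseteq> set_form A"
        using U_names[OF less.prems(1)[OF c4(1)]] U_names[OF less.prems(1)[OF c4(2)]] by blast+
      then have "Eps a c \<in> U A" by (intro U_eps) auto
      moreover have "Eps a b \<noteq> Eps b c" using c4 by auto
      then have "{#(False, Eps a b), (False, Eps b c)#} \<subseteq># parts True G"
        using c4(1,2) unfolding neg_part_def by (intro two_sub) auto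
      then have "\<not> tab_closed (Or G (Neg (Eps a c)))"
        using less.prems(2) tab_closed.eps2 by blast
      ultimately show ?thesis using step[of "Eps a c"] c4(3) by blast
    next
      fix a b assume c5: "neg_part (Eps a b) G" "neg_part (Eps b b) G" "\<not> neg_part (Eps b a) G"
      have "set_form (Eps a b) \<subseteq> set_form A"
        using U_names[OF less.prems(1)[OF c5(1)]] by blast
      then have "Eps b a \<in> U A" by (intro U_eps) auto
      moreover have "Eps a b \<noteq> Eps b b" using c5 by auto
      then have "{#(False, Eps a b), (False, Eps b b)#} \<subseteq># parts True G"
        using c5(1,2) unfolding neg_part_def by (intro two_sub) auto
      then have "\<not> tab_closed (Or G (Neg (Eps b a)))"
        using less.prems(2) tab_closed.eps3b by blast
      ultimately show ?thesis using step[of "Eps b a"] c5(3) by blast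
    qed
  qed
qed

theorem corollary3p2:
  fixes a0 :: nat and A :: fm
  assumes "\<not> tab_closed A"
  shows "refH a0 A"
proof -
  have "Y \<in> U A" if "neg_part Y A" for Y
    using that parts_subs unfolding neg_part_def U_def by blast
  then obtain H where H: "hintikka H" "\<forall>w. feval w A \<longrightarrow> feval w H"
    using sat assms by blast
  obtain L where L: "refH a0 L" "\<forall>w. feval w H \<longrightarrow> feval w L"
    using hint_ref[OF H(1)] by blast
  have "provH (Imp A L)" by (rule valid_imp) (use H L in blast)
  then show ?thesis using L(1) by (rule refH.rmp)
qed

end
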